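(* Let $D$ be a finite digraph and let $\mathcal{S}=\{S_1,\dots,S_t\}$ be a minimum dicoloring of $D$ (i.e., $t=\chi'(D)$). Then there exists a directed path $P$ of $D$ orthogonal to $\mathcal{S}$, that is, $|V(P)\cap S_i|=1$ for every $i\in\{1,\dots,t\}$.
   Context: A dicoloring of $D$ is a partition of $V(D)$ into sets $S_1,\dots,S_t$ such that each induced subdigraph $D[S_i]$ is acyclic. The dichromatic number $\chi'(D)$ is the minimum size of a dicoloring of $D$; a minimum dicoloring is a dicoloring of size $\chi'(D)$. *)

theory Defs
  imports Main
begin

definition digraph :: "'a set \<Rightarrow> ('a \<times> 'a) set \<Rightarrow> bool" where
  "digraph V A \<longleftrightarrow> A \<subseteq> V \<times> V"

definition dicoloring :: "'a set \<Rightarrow> ('a \<times> 'a) set \<Rightarrow> 'a set set \<Rightarrow> bool" where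
  "dicoloring V A \<S> \<longleftrightarrow>
     \<Union>\<S> = V \<and> {} \<notin> \<S> \<and>
     (\<forall>S\<in>\<S>. \<forall>S'\<in>\<S>. S \<noteq> S' \<longrightarrow> S \<inter> S' = {}) \<and>
     (\<forall>S\<in>\<S>. acyclic (A \<inter> (S \<times> S)))"

definition dichromatic_number :: "'a set \<Rightarrow> ('a \<times> 'a) set \<Rightarrow> nat" where
  "dichromatic_number V A = (LEAST t. \<exists>\<S>. dicoloring V A \<S> \<and> finite \<S> \<and> card \<S> = t)"

definition min_dicoloring :: "'a set \<Rightarrow> ('a \<times> 'a) set \<Rightarrow> 'a set set \<Rightarrow> bool" where
  "min_dicoloring V A \<S> \<longleftrightarrow>
     dicoloring V A \<S> \<and> finite \<S> \<and> card \<S> = dichromatic_number V A"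

definition dipath :: "'a set \<Rightarrow> ('a \<times> 'a) set \<Rightarrow> 'a list \<Rightarrow> bool" where
  "dipath V A p \<longleftrightarrow> p \<noteq> [] \<and> distinct p \<and> set p \<subseteq> V \<and>
     (\<forall>i. Suc i < length p \<longrightarrow> (p ! i, p ! Suc i) \<in> A)"

definition orthogonal :: "'a list \<Rightarrow> 'a set set \<Rightarrow> bool" where
  "orthogonal p \<S> \<longleftrightarrow> (\<forall>S\<in>\<S>. card (set p \<inter> S) = 1)"

end

theory Submission
  imports Defs
begin

lemma acyc_join:
  assumes a1: "acyclic r1" and a2: "acyclic r2" and s1: "r1 \<subseteq> R \<times> R"
    and s2: "r2 \<subseteq> X \<times> X" and s3: "r3 \<subseteq> X \<times> R" and d: "R \<inter> X = {}"
  shows "acyclic (r1 \<union> r2 \<union> r3)"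
proof -
  let ?r = "r1 \<union> r2 \<union> r3"
  have L1: "y \<in> R \<and> (x,y) \<in> r1\<^sup>+" if "(x,y) \<in> ?r\<^sup>+" "x \<in> R" for x y
    using that
  proof (induction rule: trancl_induct)
    case (base y)
    then show ?case using s1 s2 s3 d by blast
  next
    case (step y z)
    then have "y \<in> R" "(x,y) \<in> r1\<^sup>+" by auto
    moreover have "(y,z) \<in> r1" using step(2) \<open>y \<in> R\<close> s2 s3 d by blast
    ultimately show ?case using s1 by (meson SigmaD2 subsetD trancl.trancl_into_trancl)
  qed
  have L2: "y \<in> R \<or> (y \<in> X \<and> (x,y) \<in> r2\<^sup>+)" if "(x,y) \<in> ?r\<^sup>+" "x \<in> X" for x y
    using that
  proof (induction rule: trancl_induct)
    case (base y)
    then show ?case using s1 s2 s3 d by blast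
  next
    case (step y z)
    show ?case
    proof (cases "y \<in> R")
      case True
      then show ?thesis using step(2) s1 s2 s3 d by blast
    next
      case False
      then have "y \<in> X" "(x,y) \<in> r2\<^sup>+" using step by auto
      then show ?thesis using step(2) s1 s2 s3 d
        by (smt (verit, best) Int_iff Un_iff empty_iff mem_Sigma_iff subsetD trancl.trancl_into_trancl)
    qed
  qed
  show ?thesis
    unfolding acyclic_def
  proof
    fix x
    show "(x,x) \<notin> ?r\<^sup>+"
    proof
      assume h: "(x,x) \<in> ?r\<^sup>+"
      then obtain y where "(x,y) \<in> ?r" by (meson converse_tranclE)
      then have "x \<in> R \<or> x \<in> X" using s1 s2 s3 by blast
      then show False
      proof
        assume "x \<in> R" then show False using L1[OF h] a1 unfolding acyclic_def by blast
      next
        assume "x \<in> X" then show False using L2[OF h] a2 d unfolding acyclic_def by blast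
      qed
    qed
  qed
qed

fun reach :: "(nat \<Rightarrow> 'a set) \<Rightarrow> ('a \<times> 'a) set \<Rightarrow> nat \<Rightarrow> 'a set" where
  "reach f A 0 = f 0"
| "reach f A (Suc i) = {v \<in> f (Suc i). \<exists>u \<in> reach f A i. (u,v) \<in> A}"

lemma reach_sub: "reach f A i \<subseteq> f i"
  by (cases i) auto

lemma reach_path:
  "v \<in> reach f A i \<Longrightarrow> \<exists>p. length p = Suc i \<and> p ! i = v \<and> (\<forall>j\<le>i. p!j \<in> f j)
     \<and> (\<forall>j. Suc j < length p \<longrightarrow> (p!j, p!Suc j) \<in> A)"
proof (induction i arbitrary: v)
  case 0
  then show ?case by (intro exI[of _ "[v]"]) auto
next
  case (Suc i)
  then obtain u where u: "u \<in> reach f A i" "(u,v) \<in> A" "v \<in> f (Suc i)" by auto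
  from Suc.IH[OF u(1)] obtain p where p: "length p = Suc i" "p ! i = u" "\<forall>j\<le>i. p!j \<in> f j"
    "\<forall>j. Suc j < length p \<longrightarrow> (p!j, p!Suc j) \<in> A" by blast
  show ?case
  proof (intro exI[of _ "p @ [v]"] conjI allI impI)
    show "length (p @ [v]) = Suc (Suc i)" using p by simp
    show "(p @ [v]) ! Suc i = v" using p by (simp add: nth_append)
  next
    fix j assume "j \<le> Suc i"
    then show "(p @ [v]) ! j \<in> f j" using p u by (cases "j = Suc i") (auto simp: nth_append)
  next
    fix j assume j: "Suc j < length (p @ [v])"
    show "((p @ [v]) ! j, (p @ [v]) ! Suc j) \<in> A"
    proof (cases "j = i")
      case True then show ?thesis using p u by (simp add: nth_append)
    next
      case False then have "Suc j < length p" using j p by simp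
      then show ?thesis using p by (simp add: nth_append)
    qed
  qed
qed

theorem mainTheorem2:
  fixes V :: "'a set" and A :: "('a \<times> 'a) set" and \<S> :: "'a set set"
  assumes "finite V" and "V \<noteq> {}" and "digraph V A"
    and "min_dicoloring V A \<S>"
  shows "\<exists>P. dipath V A P \<and> orthogonal P \<S>"
proof -
  have dc: "dicoloring V A \<S>" and fin: "finite \<S>" and ct: "card \<S> = dichromatic_number V A"
    using assms(4) unfolding min_dicoloring_def by auto
  have U: "\<Union>\<S> = V" and ne: "{} \<notin> \<S>"
    and dj: "\<forall>S\<in>\<S>. \<forall>S'\<in>\<S>. S \<noteq> S' \<longrightarrow> S \<inter> S' = {}"
    and ac: "\<forall>S\<in>\<S>. acyclic (A \<inter> (S \<times> S))"
    using dc unfolding dicoloring_def by auto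
  define t where "t = card \<S>"
  obtain f where bij: "bij_betw f {0..<t} \<S>"
    using ex_bij_betw_nat_finite[OF fin] unfolding t_def by blast
  have tpos: "t > 0" using U assms(2) fin unfolding t_def by (metis Union_empty card_gt_0_iff)
  have fS: "i < t \<Longrightarrow> f i \<in> \<S>" for i using bij by (auto simp: bij_betw_def)
  have fdj: "i < t \<Longrightarrow> k < t \<Longrightarrow> i \<noteq> k \<Longrightarrow> f i \<inter> f k = {}" for i k
    using bij dj fS unfolding bij_betw_def inj_on_def by (metis atLeastLessThan_iff zero_le)
  have fV: "i < t \<Longrightarrow> f i \<subseteq> V" for i using fS U by blast
  have Sf: "S \<in> \<S> \<Longrightarrow> \<exists>i<t. S = f i" for S using bij by (auto simp: bij_betw_def)
  have fac: "i < t \<Longrightarrow> acyclic (A \<inter> (f i \<times> f i))" for i using ac fS by blast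
  let ?R = "reach f A"
  show ?thesis
  proof (cases "?R (t - 1) = {}")
    case False
    then obtain v where "v \<in> ?R (t-1)" by blast
    from reach_path[OF this] obtain p where p: "length p = t" "\<forall>j<t. p!j \<in> f j"
      "\<forall>j. Suc j < length p \<longrightarrow> (p!j, p!Suc j) \<in> A"
      using tpos by (metis One_nat_def Suc_pred less_Suc_eq_le)
    have dist: "distinct p"
      unfolding distinct_conv_nth
    proof (intro allI impI)
      fix i j assume "i < length p" "j < length p" "i \<noteq> j"
      then show "p ! i \<noteq> p ! j" using p fdj[of i j] by auto
    qed
    have dp: "dipath V A p"
      unfolding dipath_def using p dist fV tpos
      by (auto simp: in_set_conv_nth) (metis subsetD)
    have "orthogonal p \<S>"
      unfolding orthogonal_def
    proof
      fix S assume "S \<in> \<S>"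
      then obtain i where i: "i < t" "S = f i" using Sf by blast
      have "set p \<inter> S = {p ! i}"
      proof
        show "{p ! i} \<subseteq> set p \<inter> S" using i p by auto
        show "set p \<inter> S \<subseteq> {p ! i}"
        proof
          fix x assume "x \<in> set p \<inter> S"
          then obtain k where k: "k < t" "x = p ! k" "x \<in> f i" using p i by (auto simp: in_set_conv_nth)
          then have "k = i" using fdj[of i k] p i by auto
          then show "x \<in> {p ! i}" using k by simp
        qed
      qed
      then show "card (set p \<inter> S) = 1" by simp
    qed
    then show ?thesis using dp by blast
  next
    case True
    define X where "X j = f (Suc j) - ?R (Suc j)" for j
    define g where "g j = ?R j \<union> X j" for j
    define T where "T = g ` {..<t-1} - {{}}"
    have gdj: "j < t - 1 \<Longrightarrow> k < t - 1 \<Longrightarrow> j \<noteq> k \<Longrightarrow> g j \<inter> g k = {}" for j k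
    proof -
      assume jk: "j < t - 1" "k < t - 1" "j \<noteq> k"
      have gs: "g m \<subseteq> f m \<union> f (Suc m)" for m using reach_sub[of f A m] unfolding g_def X_def by blast
      show ?thesis
      proof (cases "k = Suc j \<or> j = Suc k")
        case True
        then show ?thesis
        proof
          assume kj: "k = Suc j"
          have st: "Suc j < t" "Suc k < t" using jk kj by auto
          have "g j \<inter> f k \<subseteq> X j" using st fdj[of j k] jk kj reach_sub[of f A j] unfolding g_def by auto
          moreover have "g k \<inter> f k \<subseteq> ?R k" using st fdj[of k "Suc k"] jk kj unfolding g_def X_def by auto
          ultimately show ?thesis
          proof (intro equalityI subsetI)
            fix x assume a: "g j \<inter> f k \<subseteq> X j" "g k \<inter> f k \<subseteq> ?R k" and x: "x \<in> g j \<inter> g k"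
            show "x \<in> {}"
            proof (cases "x \<in> f k")
              case True
              then have "x \<in> X j" "x \<in> ?R k" using a x by blast+
              then show ?thesis unfolding X_def kj by blast
            next
              case False
              then have "x \<in> f j" "x \<in> f (Suc k)" using x gs[of j] gs[of k] kj by blast+
              then show ?thesis using fdj[of j "Suc k"] st jk kj by auto
            qed
          qed simp
        next
          assume kj: "j = Suc k"
          have st: "Suc j < t" "Suc k < t" using jk kj by auto
          have "g k \<inter> f j \<subseteq> X k" using st fdj[of k j] jk kj reach_sub[of f A k] unfolding g_def by auto
          moreover have "g j \<inter> f j \<subseteq> ?R j" using st fdj[of j "Suc j"] jk kj unfolding g_def X_def by auto
          ultimately show ?thesis
          proof (intro equalityI subsetI)
            fix x assume a: "g k \<inter> f j \<subseteq> X k" "g j \<inter> f j \<subseteq> ?R j" and x: "x \<in> g j \<inter> g k"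
            show "x \<in> {}"
            proof (cases "x \<in> f j")
              case True
              then have "x \<in> X k" "x \<in> ?R j" using a x by blast+
              then show ?thesis unfolding X_def kj by blast
            next
              case False
              then have "x \<in> f k" "x \<in> f (Suc j)" using x gs[of j] gs[of k] kj by blast+
              then show ?thesis using fdj[of k "Suc j"] st jk kj by auto
            qed
          qed simp
        qed
      next
        case False
        have st: "Suc j < t" "Suc k < t" using jk by auto
        show ?thesis
        proof (intro equalityI subsetI)
          fix x assume x: "x \<in> g j \<inter> g k"
          then have "x \<in> f j \<or> x \<in> f (Suc j)" "x \<in> f k \<or> x \<in> f (Suc k)" using gs[of j] gs[of k] by blast+
          then show "x \<in> {}" using False st jk fdj[of j k] fdj[of j "Suc k"] fdj[of "Suc j" k]
            fdj[of "Suc j" "Suc k"] by auto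
        qed simp
      qed
    qed
    have UT: "\<Union>T = V"
    proof
      show "\<Union>T \<subseteq> V"
      proof
        fix x assume "x \<in> \<Union>T"
        then obtain j where j: "j < t - 1" "x \<in> g j" unfolding T_def by blast
        then have "x \<in> f j \<union> f (Suc j)" using reach_sub[of f A j] unfolding g_def X_def by blast
        moreover have "j < t" "Suc j < t" using j by auto
        ultimately show "x \<in> V" using fV[of j] fV[of "Suc j"] by blast
      qed
      show "V \<subseteq> \<Union>T"
      proof
        fix v assume "v \<in> V"
        then obtain i where i: "i < t" "v \<in> f i" using U Sf by blast
        show "v \<in> \<Union>T"
        proof (cases "v \<in> ?R i")
          case True
          then have "i \<noteq> t - 1" using \<open>?R (t-1) = {}\<close> by auto
          then have "i < t - 1" using i by simp
          then show ?thesis using True unfolding T_def g_def by blast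
        next
          case False
          then have "i \<noteq> 0" using i by (metis reach.simps(1))
          then obtain j where j: "i = Suc j" by (cases i) auto
          then have "j < t - 1" "v \<in> X j" using i False unfolding X_def by auto
          then show ?thesis unfolding T_def g_def by blast
        qed
      qed
    qed
    have dT: "dicoloring V A T"
      unfolding dicoloring_def
    proof (intro conjI ballI impI)
      show "\<Union>T = V" by (rule UT)
      show "{} \<notin> T" unfolding T_def by blast
    next
      fix S S' assume "S \<in> T" "S' \<in> T" "S \<noteq> S'"
      then obtain j k where "j < t - 1" "k < t - 1" "S = g j" "S' = g k" unfolding T_def by blast
      then show "S \<inter> S' = {}" using gdj \<open>S \<noteq> S'\<close> by blast
    next
      fix S assume "S \<in> T"
      then obtain j where j: "j < t - 1" "S = g j" unfolding T_def by blast
      have noarc: "A \<inter> (?R j \<times> X j) = {}" unfolding X_def by auto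
      have "Suc j < t" using j by simp
      have RX: "?R j \<inter> X j = {}"
        using \<open>Suc j < t\<close> fdj[of j "Suc j"] j reach_sub[of f A j] unfolding X_def by auto
      have "acyclic ((A \<inter> (?R j \<times> ?R j)) \<union> (A \<inter> (X j \<times> X j)) \<union> (A \<inter> (X j \<times> ?R j)))"
      proof (rule acyc_join[OF _ _ _ _ _ RX])
        show "acyclic (A \<inter> (?R j \<times> ?R j))"
        proof (rule acyclic_subset[OF fac[of j]])
          show "j < t" using j by simp
          show "A \<inter> (?R j \<times> ?R j) \<subseteq> A \<inter> (f j \<times> f j)" using reach_sub[of f A j] by auto
        qed
        show "acyclic (A \<inter> (X j \<times> X j))"
        proof (rule acyclic_subset[OF fac[of "Suc j"]])
          show "Suc j < t" using j by simp
          show "A \<inter> (X j \<times> X j) \<subseteq> A \<inter> (f (Suc j) \<times> f (Suc j))" unfolding X_def by auto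
        qed
      qed auto
      moreover have "A \<inter> (S \<times> S) \<subseteq> (A \<inter> (?R j \<times> ?R j)) \<union> (A \<inter> (X j \<times> X j)) \<union> (A \<inter> (X j \<times> ?R j))"
        using noarc unfolding j g_def by blast
      ultimately show "acyclic (A \<inter> (S \<times> S))" using acyclic_subset by blast
    qed
    have finT: "finite T" unfolding T_def by simp
    have "card T \<le> card (g ` {..<t-1})" unfolding T_def by (rule card_mono) auto
    also have "\<dots> \<le> t - 1" using card_image_le[of "{..<t-1}" g] by simp
    finally have cT: "card T < t" using tpos by simp
    have "dichromatic_number V A \<le> card T"
      unfolding dichromatic_number_def by (rule Least_le) (use dT finT in blast)
    then show ?thesis using cT ct t_def by simp
  qed
qed

end
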